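(* In the cost setting described in the context, for every choice of $d^*\le D/2$ there is an instance (with minimal expected delay $d^*$) for which every algorithm has pseudo-regret $\Omega(d^* )$.
   Context: Delay-as-payoff bandit: there are $K$ arms, a horizon $T$ and a maximum delay $D$. Each arm $i$ has a distribution $\mathcal{D}_i$ on $\{0,1,\dots,D\}$; at each step $t$ the agent chooses $i_t$ based on observed feedback, a delay $d_t\sim\mathcal{D}_{i_t}$ is drawn independently and revealed only at time $t+d_t$; the payoff is the cost $c_t=d_t/D$, to be minimized. Let $\mu(i)=\mathbb{E}_{X\sim\mathcal{D}_i}[X/D]$, $\mu^*=\min_i\mu(i)$, $d^*=D\mu^*$ (the minimal expected delay over arms). Pseudo-regret: $\mathbb{E}[\sum_{t=1}^T c_t]-T\mu^*$. *)

theory Defs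
  imports "HOL-Probability.Probability"
begin

text \<open>Arms are 0,...,K-1; rounds are 0,...,T-1.
  An instance is a family of delay distributions nu i on naturals (supported in {0..D}).
  A history is the list of (chosen arm, realized delay) pairs of the past rounds.\<close>

type_synonym history = "(nat \<times> nat) list"
type_synonym observation = "(nat \<times> nat option) list"

text \<open>What the agent sees before choosing at round t: its own past arms, and for each past
  round s the delay d_s iff it has been revealed, i.e. s + d_s < t (revealed at time s + d_s).\<close>
definition observe :: "nat \<Rightarrow> history \<Rightarrow> observation" where
  "observe t h = map (\<lambda>s. (fst (h ! s), if s + snd (h ! s) < t then Some (snd (h ! s)) else None))
                     [0..<length h]"

type_synonym policy = "nat \<Rightarrow> observation \<Rightarrow> nat pmf"

definition valid_policy :: "nat \<Rightarrow> policy \<Rightarrow> bool" where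
  "valid_policy K \<pi> \<longleftrightarrow> (\<forall>t obs. set_pmf (\<pi> t obs) \<subseteq> {..<K})"

definition valid_instance :: "nat \<Rightarrow> nat \<Rightarrow> (nat \<Rightarrow> nat pmf) \<Rightarrow> bool" where
  "valid_instance K D \<nu> \<longleftrightarrow> (\<forall>i<K. set_pmf (\<nu> i) \<subseteq> {0..D})"

fun hist :: "(nat \<Rightarrow> nat pmf) \<Rightarrow> policy \<Rightarrow> nat \<Rightarrow> history pmf" where
  "hist \<nu> \<pi> 0 = return_pmf []"
| "hist \<nu> \<pi> (Suc t) =
     bind_pmf (hist \<nu> \<pi> t) (\<lambda>h.
     bind_pmf (\<pi> t (observe t h)) (\<lambda>i.
     bind_pmf (\<nu> i) (\<lambda>d. return_pmf (h @ [(i, d)]))))"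

definition mean_delay :: "(nat \<Rightarrow> nat pmf) \<Rightarrow> nat \<Rightarrow> real" where
  "mean_delay \<nu> i = measure_pmf.expectation (\<nu> i) real"

definition min_mean_delay :: "nat \<Rightarrow> (nat \<Rightarrow> nat pmf) \<Rightarrow> real" where
  "min_mean_delay K \<nu> = Min (mean_delay \<nu> ` {..<K})"

definition pseudo_regret :: "nat \<Rightarrow> nat \<Rightarrow> nat \<Rightarrow> (nat \<Rightarrow> nat pmf) \<Rightarrow> policy \<Rightarrow> real" where
  "pseudo_regret K D T \<nu> \<pi> =
     measure_pmf.expectation (hist \<nu> \<pi> T) (\<lambda>h. \<Sum>p\<leftarrow>h. real (snd p) / real D)
     - real T * (min_mean_delay K \<nu> / real D)"

end

theory Submission
  imports Defs
begin

lemma exp_bind: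
  fixes f :: "'b \<Rightarrow> real"
  assumes "finite (set_pmf M)" "\<And>x. x \<in> set_pmf M \<Longrightarrow> finite (set_pmf (N x))"
  shows "measure_pmf.expectation (bind_pmf M N) f =
         measure_pmf.expectation M (\<lambda>x. measure_pmf.expectation (N x) f)"
  apply (subst pmf_expectation_bind[of "set_pmf M"])
  using assms apply auto[3]
  apply (subst integral_measure_pmf[of "set_pmf M"])
  using assms by auto

lemma exp_add_const:
  fixes f :: "'b \<Rightarrow> real"
  assumes "finite (set_pmf M)"
  shows "measure_pmf.expectation M (\<lambda>x. f x + c) = measure_pmf.expectation M f + c"
  using assms by (simp add: Bochner_Integration.integral_add integrable_measure_pmf_finite)

lemma hist_len: "h \<in> set_pmf (hist \<nu> \<pi> t) \<Longrightarrow> length h = t"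
  by (induction t arbitrary: h) auto

lemma hist_fin:
  assumes "\<And>i. finite (set_pmf (\<nu> i))" "valid_policy K \<pi>"
  shows "finite (set_pmf (hist \<nu> \<pi> t))"
proof (induction t)
  case 0 then show ?case by simp
next
  case (Suc t)
  have "finite (set_pmf (\<pi> t obs))" for obs
    using assms(2) unfolding valid_policy_def by (meson finite_lessThan finite_subset)
  then show ?case using Suc assms(1) by (auto simp: set_bind_pmf)
qed

lemma hist_del:
  assumes "\<And>i. set_pmf (\<nu> i) \<subseteq> S"
  shows "h \<in> set_pmf (hist \<nu> \<pi> t) \<Longrightarrow> x \<in> set h \<Longrightarrow> snd x \<in> S"
  using assms by (induction t arbitrary: h) (auto, blast)

lemma sum_plus_const: "(\<Sum>x\<leftarrow>xs. f x + (c::real)) = (\<Sum>x\<leftarrow>xs. f x) + real (length xs) * c"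
  by (induction xs) (auto simp: algebra_simps)

lemma lemB:
  fixes c :: "nat \<Rightarrow> nat \<Rightarrow> real"
  assumes fin: "\<And>i. finite (set_pmf (\<nu> i))" and vp: "valid_policy K \<pi>"
    and mu: "\<And>i. measure_pmf.expectation (\<nu> i) (c i) = mu i"
  shows "measure_pmf.expectation (hist \<nu> \<pi> t) (\<lambda>h. \<Sum>p\<leftarrow>h. c (fst p) (snd p))
       = measure_pmf.expectation (hist \<nu> \<pi> t) (\<lambda>h. \<Sum>p\<leftarrow>h. mu (fst p))"
proof (induction t)
  case 0 then show ?case by simp
next
  case (Suc t)
  have fp: "finite (set_pmf (\<pi> t obs))" for obs
    using vp unfolding valid_policy_def by (meson finite_lessThan finite_subset)
  have fh: "finite (set_pmf (hist \<nu> \<pi> t))" using hist_fin[OF fin vp] .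
  have fin2: "finite (set_pmf (\<pi> t (observe t h) \<bind> (\<lambda>i. \<nu> i \<bind> (\<lambda>d. return_pmf (h @ [(i, d)])))))" for h
    using fp fin by (auto simp: set_bind_pmf)
  have fin3: "finite (set_pmf (\<nu> i \<bind> (\<lambda>d. return_pmf (h @ [(i, d)]))))" for i h
    using fin by (auto simp: set_bind_pmf)
  have L: "measure_pmf.expectation (hist \<nu> \<pi> (Suc t)) g =
     measure_pmf.expectation (hist \<nu> \<pi> t) (\<lambda>h. measure_pmf.expectation (\<pi> t (observe t h))
        (\<lambda>i. measure_pmf.expectation (\<nu> i) (\<lambda>d. g (h @ [(i, d)]))))" for g :: "history \<Rightarrow> real"
    apply (simp only: hist.simps)
    apply (subst exp_bind[OF fh fin2])
    apply (subst exp_bind[OF fp fin3])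
    apply (subst exp_bind[OF fin])
    apply simp
    apply simp
    done
  have "measure_pmf.expectation (hist \<nu> \<pi> (Suc t)) (\<lambda>h. \<Sum>p\<leftarrow>h. c (fst p) (snd p))
     = measure_pmf.expectation (hist \<nu> \<pi> t) (\<lambda>h. (\<Sum>p\<leftarrow>h. c (fst p) (snd p)) +
           measure_pmf.expectation (\<pi> t (observe t h)) mu)"
    unfolding L
    by (simp add: add.commute[of "sum_list _"] exp_add_const fin fp mu)
  also have "\<dots> = measure_pmf.expectation (hist \<nu> \<pi> t) (\<lambda>h. \<Sum>p\<leftarrow>h. c (fst p) (snd p)) +
      measure_pmf.expectation (hist \<nu> \<pi> t) (\<lambda>h. measure_pmf.expectation (\<pi> t (observe t h)) mu)"
    by (simp add: Bochner_Integration.integral_add integrable_measure_pmf_finite fh)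
  also have "\<dots> = measure_pmf.expectation (hist \<nu> \<pi> t) (\<lambda>h. \<Sum>p\<leftarrow>h. mu (fst p)) +
      measure_pmf.expectation (hist \<nu> \<pi> t) (\<lambda>h. measure_pmf.expectation (\<pi> t (observe t h)) mu)"
    using Suc by simp
  also have "\<dots> = measure_pmf.expectation (hist \<nu> \<pi> t) (\<lambda>h. (\<Sum>p\<leftarrow>h. mu (fst p)) +
           measure_pmf.expectation (\<pi> t (observe t h)) mu)"
    by (simp add: Bochner_Integration.integral_add integrable_measure_pmf_finite fh)
  also have "\<dots> = measure_pmf.expectation (hist \<nu> \<pi> (Suc t)) (\<lambda>h. \<Sum>p\<leftarrow>h. mu (fst p))"
    unfolding L
    by (simp add: add.commute[of "sum_list _"] exp_add_const fin fp mu)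
  finally show ?case .
qed


definition obsA :: "nat list \<Rightarrow> observation" where
  "obsA a = map (\<lambda>i. (i, None)) a"

fun arms :: "policy \<Rightarrow> nat \<Rightarrow> nat list pmf" where
  "arms \<pi> 0 = return_pmf []"
| "arms \<pi> (Suc t) = bind_pmf (arms \<pi> t) (\<lambda>a. bind_pmf (\<pi> t (obsA a)) (\<lambda>i. return_pmf (a @ [i])))"

lemma arms_len: "a \<in> set_pmf (arms \<pi> t) \<Longrightarrow> length a = t"
  by (induction t arbitrary: a) auto

lemma observe_none:
  assumes "length h = t" "\<And>x. x \<in> set h \<Longrightarrow> snd x \<ge> t"
  shows "observe t h = obsA (map fst h)"
  unfolding observe_def obsA_def
proof (intro nth_equalityI)
  fix i assume "i < length (map (\<lambda>s. (fst (h ! s), if s + snd (h ! s) < t then Some (snd (h ! s)) else None)) [0..<length h])"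
  then have i: "i < length h" by simp
  then have "snd (h ! i) \<ge> t" using assms(2) nth_mem by blast
  then show "map (\<lambda>s. (fst (h ! s), if s + snd (h ! s) < t then Some (snd (h ! s)) else None)) [0..<length h] ! i =
         map (\<lambda>i. (i, None)) (map fst h) ! i" using i by simp
qed simp

lemma hist_arms:
  assumes "\<And>i. set_pmf (\<nu> i) \<subseteq> {m..}"
  shows "t \<le> Suc m \<Longrightarrow> map_pmf (map fst) (hist \<nu> \<pi> t) = arms \<pi> t"
proof (induction t)
  case 0 then show ?case by simp
next
  case (Suc t)
  have IH: "map_pmf (map fst) (hist \<nu> \<pi> t) = arms \<pi> t" using Suc by simp
  have "map_pmf (map fst) (hist \<nu> \<pi> (Suc t)) =
     bind_pmf (hist \<nu> \<pi> t) (\<lambda>h. bind_pmf (\<pi> t (obsA (map fst h))) (\<lambda>i. return_pmf (map fst h @ [i])))"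
    unfolding hist.simps
  proof (subst map_bind_pmf, intro bind_pmf_cong refl)
    fix h assume h: "h \<in> set_pmf (hist \<nu> \<pi> t)"
    have "observe t h = obsA (map fst h)"
    proof (rule observe_none)
      show "length h = t" using hist_len[OF h] .
      fix x assume "x \<in> set h"
      then have "snd x \<in> {m..}" using hist_del[OF assms h] by blast
      then show "snd x \<ge> t" using Suc.prems by auto
    qed
    then show "map_pmf (map fst) (\<pi> t (observe t h) \<bind> (\<lambda>i. \<nu> i \<bind> (\<lambda>d. return_pmf (h @ [(i, d)])))) =
        \<pi> t (obsA (map fst h)) \<bind> (\<lambda>i. return_pmf (map fst h @ [i]))"
      by (simp add: map_bind_pmf map_pmf_comp o_def map_pmf_def[symmetric])
  qed
  also have "\<dots> = arms \<pi> (Suc t)"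
    by (simp add: IH[symmetric] bind_map_pmf)
  finally show ?case .
qed

lemma hist_take: "n \<le> t \<Longrightarrow> map_pmf (take n) (hist \<nu> \<pi> t) = hist \<nu> \<pi> n"
proof (induction t)
  case 0 then show ?case by simp
next
  case (Suc t)
  show ?case
  proof (cases "n = Suc t")
    case True
    have "map_pmf (take n) (hist \<nu> \<pi> (Suc t)) = map_pmf id (hist \<nu> \<pi> (Suc t))"
      by (intro map_pmf_cong refl) (auto simp: True dest: hist_len)
    then show ?thesis using True by simp
  next
    case False
    then have n: "n \<le> t" using Suc.prems by simp
    have "map_pmf (take n) (hist \<nu> \<pi> (Suc t)) = map_pmf (take n) (hist \<nu> \<pi> t)"
      unfolding hist.simps map_bind_pmf
      apply (subst (2) map_pmf_def)
      apply (intro bind_pmf_cong refl)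
      using n by (auto simp: map_bind_pmf map_pmf_comp o_def map_pmf_def[symmetric] dest!: hist_len)
    then show ?thesis using Suc.IH n by simp
  qed
qed


lemma exp_cong:
  fixes f g :: "'a \<Rightarrow> real"
  shows "(\<And>x. x \<in> set_pmf M \<Longrightarrow> f x = g x) \<Longrightarrow> measure_pmf.expectation M f = measure_pmf.expectation M g"
  by (intro integral_cong_AE AE_pmfI) auto

lemma exp_mono:
  fixes f g :: "'a \<Rightarrow> real"
  shows "finite (set_pmf M) \<Longrightarrow> (\<And>x. x \<in> set_pmf M \<Longrightarrow> f x \<le> g x) \<Longrightarrow>
     measure_pmf.expectation M f \<le> measure_pmf.expectation M g"
  by (intro integral_mono_AE AE_pmfI integrable_measure_pmf_finite) auto

lemma arms_fin:
  assumes "valid_policy K \<pi>"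
  shows "finite (set_pmf (arms \<pi> t))"
proof (induction t)
  case 0 then show ?case by simp
next
  case (Suc t)
  have "finite (set_pmf (\<pi> t obs))" for obs
    using assms unfolding valid_policy_def by (meson finite_lessThan finite_subset)
  then show ?case using Suc by (auto simp: set_bind_pmf)
qed

lemma cnt_sum: "(\<Sum>i\<leftarrow>a. (if i = j then 0 else r)) = (r::real) * real (length (filter (\<lambda>i. i \<noteq> j) a))"
  by (induction a) (auto simp: algebra_simps)

lemma cnt01: "length (filter (\<lambda>i. i \<noteq> (0::nat)) a) + length (filter (\<lambda>i. i \<noteq> 1) a) \<ge> length a"
  by (induction a) auto

lemma sum_take_le:
  assumes "\<And>i. (w::nat \<Rightarrow> real) i \<ge> 0"
  shows "(\<Sum>p\<leftarrow>take n h. w (fst p)) \<le> (\<Sum>p\<leftarrow>h. w (fst p))"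
proof -
  have "(\<Sum>p\<leftarrow>h. w (fst p)) = (\<Sum>p\<leftarrow>take n h. w (fst p)) + (\<Sum>p\<leftarrow>drop n h. w (fst p))"
    by (metis append_take_drop_id map_append sum_list_append)
  moreover have "(\<Sum>p\<leftarrow>drop n h. w (fst p)) \<ge> 0" by (intro sum_list_nonneg) (auto simp: assms)
  ultimately show ?thesis by simp
qed

definition good :: "nat \<Rightarrow> real \<Rightarrow> nat pmf" where
  "good m p = map_pmf (\<lambda>b. if b then Suc m else m) (bernoulli_pmf p)"

definition inst :: "nat \<Rightarrow> nat \<Rightarrow> real \<Rightarrow> nat \<Rightarrow> nat \<Rightarrow> nat pmf" where
  "inst j m p D = (\<lambda>i. if i = j then good m p else return_pmf D)"

lemma good_set: "set_pmf (good m p) \<subseteq> {m, Suc m}"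
  by (auto simp: good_def)

lemma good_mean: "0 \<le> p \<Longrightarrow> p \<le> 1 \<Longrightarrow> measure_pmf.expectation (good m p) real = real m + p"
  by (simp add: good_def algebra_simps)

theorem theorem2:
  "\<exists>c>0. \<forall>K D T (dstar::real) \<pi>.
      K \<ge> 2 \<longrightarrow> D \<ge> 1 \<longrightarrow> 0 \<le> dstar \<longrightarrow> dstar \<le> real D / 2 \<longrightarrow> dstar \<le> real T \<longrightarrow>
      valid_policy K \<pi> \<longrightarrow>
      (\<exists>\<nu>. valid_instance K D \<nu> \<and> min_mean_delay K \<nu> = dstar \<and>
           pseudo_regret K D T \<nu> \<pi> \<ge> c * dstar)"
proof (intro exI[of _ "1/8"] conjI allI impI)
  fix K D T :: nat and dstar :: real and \<pi> :: policy
  assume K: "K \<ge> 2" and D: "D \<ge> 1" and d0: "0 \<le> dstar" and dD: "dstar \<le> real D / 2"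
    and dT: "dstar \<le> real T" and vp: "valid_policy K \<pi>"
  define m where "m = nat \<lfloor>dstar\<rfloor>"
  define p where "p = dstar - real m"
  have mle: "real m \<le> dstar" and mgt: "dstar < real m + 1" using d0 unfolding m_def by linarith+
  have p0: "0 \<le> p" and p1: "p \<le> 1" using mle mgt unfolding p_def by auto
  have SmD: "Suc m \<le> D"
  proof -
    have "real m + 1 \<le> real D"
    proof (cases "D = 1")
      case True then have "dstar < 1" using dD by simp
      then have "m = 0" using mle d0 unfolding m_def by linarith
      then show ?thesis using True by simp
    next
      case False then have "real D \<ge> 2" using D by simp
      then show ?thesis using mle dD by simp
    qed
    then show ?thesis by simp
  qed
  define n where "n = min T (max 1 m)"
  have nT: "n \<le> T" and nm: "n \<le> Suc m" unfolding n_def by auto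
  have nd: "real n \<ge> dstar / 2"
  proof (cases "T = 0")
    case True then show ?thesis using dT d0 n_def by simp
  next
    case False
    have "real (max 1 m) \<ge> dstar / 2"
    proof (cases "m = 0")
      case True then show ?thesis using mgt by simp
    next
      case False then show ?thesis using mgt by simp
    qed
    moreover have "real T \<ge> dstar / 2" using dT d0 by simp
    ultimately show ?thesis unfolding n_def by simp
  qed
  define E where "E j = measure_pmf.expectation (arms \<pi> n) (\<lambda>a. real (length (filter (\<lambda>i. i \<noteq> j) a)))" for j :: nat
  have afin: "finite (set_pmf (arms \<pi> n))" using arms_fin[OF vp] .
  have "E 0 + E 1 = measure_pmf.expectation (arms \<pi> n)
        (\<lambda>a. real (length (filter (\<lambda>i. i \<noteq> 0) a)) + real (length (filter (\<lambda>i. i \<noteq> 1) a)))"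
    unfolding E_def by (simp add: Bochner_Integration.integral_add integrable_measure_pmf_finite afin)
  also have "\<dots> \<ge> measure_pmf.expectation (arms \<pi> n) (\<lambda>a. real n)"
    apply (rule exp_mono[OF afin])
    using cnt01 arms_len by (metis of_nat_add of_nat_le_iff)
  finally have E01: "E 0 + E 1 \<ge> real n" by simp
  obtain j where j: "j \<in> {0, 1}" and Ej: "E j \<ge> real n / 2"
  proof (cases "E 0 \<ge> real n / 2")
    case True then show ?thesis using that[of 0] by simp
  next
    case False then show ?thesis using that[of 1] E01 by simp
  qed
  have jK: "j < K" using j K by auto
  define \<nu> where "\<nu> = inst j m p D"
  have nfin: "finite (set_pmf (\<nu> i))" for i
    unfolding \<nu>_def inst_def using good_set by (auto intro: finite_subset)
  have nsup: "set_pmf (\<nu> i) \<subseteq> {m..D}" for i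
    unfolding \<nu>_def inst_def using SmD by (auto dest!: subsetD[OF good_set[of m p]])
  have mean: "mean_delay \<nu> i = (if i = j then dstar else real D)" for i
    unfolding \<nu>_def inst_def mean_delay_def using good_mean[OF p0 p1] p_def by auto
  have vi: "valid_instance K D \<nu>" unfolding valid_instance_def using nsup by (meson atLeastAtMost_iff atLeastatMost_subset_iff order_refl subset_trans zero_le)
  have mm: "min_mean_delay K \<nu> = dstar"
    unfolding min_mean_delay_def
  proof (rule Min_eqI)
    show "finite (mean_delay \<nu> ` {..<K})" by simp
    show "\<And>y. y \<in> mean_delay \<nu> ` {..<K} \<Longrightarrow> dstar \<le> y" using mean dD d0 by auto
    show "dstar \<in> mean_delay \<nu> ` {..<K}" using mean jK by (auto intro!: image_eqI[of _ _ j])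
  qed
  define r where "r = (real D - dstar) / real D"
  have r2: "r \<ge> 1/2" unfolding r_def using D dD by (simp add: field_simps)
  define w where "w i = (if i = j then 0 else r)" for i :: nat
  have w0: "w i \<ge> 0" for i unfolding w_def using r2 by simp
  have hfin: "finite (set_pmf (hist \<nu> \<pi> t))" for t using hist_fin[OF nfin vp] .
  have "measure_pmf.expectation (hist \<nu> \<pi> T) (\<lambda>h. \<Sum>p\<leftarrow>h. real (snd p) / real D)
      = measure_pmf.expectation (hist \<nu> \<pi> T) (\<lambda>h. \<Sum>p\<leftarrow>h. mean_delay \<nu> (fst p) / real D)"
    by (rule lemB[OF nfin vp]) (simp add: mean_delay_def)
  also have "\<dots> = measure_pmf.expectation (hist \<nu> \<pi> T) (\<lambda>h. (\<Sum>p\<leftarrow>h. w (fst p)) + real T * (dstar / real D))"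
  proof (rule exp_cong)
    fix h assume "h \<in> set_pmf (hist \<nu> \<pi> T)"
    then have len: "length h = T" by (rule hist_len)
    have "mean_delay \<nu> i / real D = w i + dstar / real D" for i
      unfolding mean w_def r_def using D by (auto simp: field_simps)
    then show "(\<Sum>p\<leftarrow>h. mean_delay \<nu> (fst p) / real D) = (\<Sum>p\<leftarrow>h. w (fst p)) + real T * (dstar / real D)"
      by (simp add: sum_plus_const len)
  qed
  also have "\<dots> = measure_pmf.expectation (hist \<nu> \<pi> T) (\<lambda>h. \<Sum>p\<leftarrow>h. w (fst p)) + real T * (dstar / real D)"
    by (rule exp_add_const[OF hfin])
  finally have reg: "pseudo_regret K D T \<nu> \<pi> = measure_pmf.expectation (hist \<nu> \<pi> T) (\<lambda>h. \<Sum>p\<leftarrow>h. w (fst p))"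
    unfolding pseudo_regret_def mm by simp
  have "measure_pmf.expectation (hist \<nu> \<pi> T) (\<lambda>h. \<Sum>p\<leftarrow>h. w (fst p))
     \<ge> measure_pmf.expectation (hist \<nu> \<pi> T) (\<lambda>h. \<Sum>p\<leftarrow>take n h. w (fst p))"
    by (rule exp_mono[OF hfin]) (rule sum_take_le[OF w0])
  also have "measure_pmf.expectation (hist \<nu> \<pi> T) (\<lambda>h. \<Sum>p\<leftarrow>take n h. w (fst p))
     = measure_pmf.expectation (map_pmf (take n) (hist \<nu> \<pi> T)) (\<lambda>h. \<Sum>p\<leftarrow>h. w (fst p))"
    by simp
  also have "\<dots> = measure_pmf.expectation (hist \<nu> \<pi> n) (\<lambda>h. \<Sum>i\<leftarrow>map fst h. w i)"
    using hist_take[OF nT] by (simp add: o_def)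
  also have "\<dots> = measure_pmf.expectation (map_pmf (map fst) (hist \<nu> \<pi> n)) (\<lambda>a. \<Sum>i\<leftarrow>a. w i)"
    by simp
  also have "\<dots> = measure_pmf.expectation (arms \<pi> n) (\<lambda>a. \<Sum>i\<leftarrow>a. w i)"
    using hist_arms[of \<nu> m n \<pi>] nsup nm by fastforce
  also have "\<dots> = r * E j"
    unfolding E_def w_def cnt_sum by simp
  finally have "pseudo_regret K D T \<nu> \<pi> \<ge> r * E j" using reg by simp
  moreover have "r * E j \<ge> (1/2) * (real n / 2)"
    using r2 Ej by (intro mult_mono) auto
  ultimately have "pseudo_regret K D T \<nu> \<pi> \<ge> 1/8 * dstar" using nd by simp
  then show "\<exists>\<nu>. valid_instance K D \<nu> \<and> min_mean_delay K \<nu> = dstar \<and> 1/8 * dstar \<le> pseudo_regret K D T \<nu> \<pi>"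
    using vi mm by blast
qed simp

end
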